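(* Let $\Omega\subset\mathbb{R}^2$ be compact with non-empty interior. If $$h\ge 2\max\{|z-w|: z\in uf(\Omega),\ w\in\partial\Omega\},$$ then $\Omega$ has a unique solid angle center of height $h$.
   Context: $A_\Omega^{(h)}(x)=\int_\Omega \frac{h}{(|y-x|^2+h^2)^{3/2}}\,dy$; a solid angle center of height $h$ is a maximizer of $A_\Omega^{(h)}$ over $\mathbb{R}^2$. Minimal unfolded region: for $v\in S^1$ and $c\in\mathbb{R}$ let $I_{v,c}$ be the reflection in the line $\{z: z\cdot v=c\}$, $\Omega^+_{v,a}=\Omega\cap\{z\cdot v\ge a\}$, $\Omega^-_{v,a}=\Omega\cap\{z\cdot v\le a\}$, $u(v)=\inf\{b: I_{v,c}(\Omega^+_{v,c})\subset\Omega\ \forall c\ge b\}$, $l(v)=\sup\{b: I_{v,c}(\Omega^-_{v,c})\subset\Omega\ \forall c\le b\}$, and $uf(\Omega)=\bigcap_{v\in S^1}\{z\in\mathbb{R}^2: l(v)\le z\cdot v\le u(v)\}$. *)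

theory Defs
  imports "HOL-Analysis.Analysis"
begin

definition solid_angle :: "(real^2) set \<Rightarrow> real \<Rightarrow> real^2 \<Rightarrow> real" where
  "solid_angle \<Omega> h x = integral \<Omega> (\<lambda>y. h / (norm (y - x) ^ 2 + h ^ 2) powr (3/2))"

definition solid_angle_center :: "(real^2) set \<Rightarrow> real \<Rightarrow> real^2 \<Rightarrow> bool" where
  "solid_angle_center \<Omega> h x \<longleftrightarrow> (\<forall>z. solid_angle \<Omega> h z \<le> solid_angle \<Omega> h x)"

definition refl_line :: "real^2 \<Rightarrow> real \<Rightarrow> real^2 \<Rightarrow> real^2" where
  "refl_line v c z = z - (2 * (z \<bullet> v - c)) *\<^sub>R v"

definition cap_plus :: "(real^2) set \<Rightarrow> real^2 \<Rightarrow> real \<Rightarrow> (real^2) set" where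
  "cap_plus \<Omega> v a = \<Omega> \<inter> {z. z \<bullet> v \<ge> a}"

definition cap_minus :: "(real^2) set \<Rightarrow> real^2 \<Rightarrow> real \<Rightarrow> (real^2) set" where
  "cap_minus \<Omega> v a = \<Omega> \<inter> {z. z \<bullet> v \<le> a}"

definition uf_upper :: "(real^2) set \<Rightarrow> real^2 \<Rightarrow> real" where
  "uf_upper \<Omega> v = Inf {b. \<forall>c\<ge>b. refl_line v c ` cap_plus \<Omega> v c \<subseteq> \<Omega>}"

definition uf_lower :: "(real^2) set \<Rightarrow> real^2 \<Rightarrow> real" where
  "uf_lower \<Omega> v = Sup {b. \<forall>c\<le>b. refl_line v c ` cap_minus \<Omega> v c \<subseteq> \<Omega>}"

definition unfolded_region :: "(real^2) set \<Rightarrow> (real^2) set" where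
  "unfolded_region \<Omega> =
     (\<Inter>v\<in>sphere 0 1. {z. uf_lower \<Omega> v \<le> z \<bullet> v \<and> z \<bullet> v \<le> uf_upper \<Omega> v})"

end

theory Submission
  imports Defs
begin



definition Kf :: "real \<Rightarrow> real^2 \<Rightarrow> real" where
  "Kf h p = h / (norm p ^ 2 + h ^ 2) powr (3/2)"

lemma absint_cont_compact:
  fixes f :: "real^2 \<Rightarrow> real"
  assumes "compact S" "continuous_on S f"
  shows "f absolutely_integrable_on S"
proof -
  have "integrable lborel (\<lambda>x. indicator S x *\<^sub>R f x)"
    by (rule borel_integrable_compact[OF assms])
  then show ?thesis unfolding set_integrable_def
    by (metis borel_measurable_integrable integrable_completion)
qed

lemma Kf_pos: "h > 0 \<Longrightarrow> Kf h p > 0"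
  unfolding Kf_def by (auto intro!: divide_pos_pos simp: add_nonneg_pos)

lemma Kf_le: assumes "h > 0" shows "Kf h p \<le> 1 / h^2"
proof -
  have "(h^2) powr (3/2) \<le> (norm p ^ 2 + h ^ 2) powr (3/2)"
    using assms by (intro powr_mono2) auto
  moreover have "(h^2) powr (3/2) = h^3"
  proof -
    have "(h^2) powr (3/2) = (h powr 2) powr (3/2)" using assms by simp
    also have "\<dots> = h powr 3" by (simp only: powr_powr) simp
    also have "\<dots> = h^3" using assms by simp
    finally show ?thesis .
  qed
  ultimately have "h / (norm p ^ 2 + h ^ 2) powr (3/2) \<le> h / h^3"
    using assms by (intro divide_left_mono) auto
  also have "h / h^3 = 1 / h^2" using assms by (simp add: power3_eq_cube power2_eq_square)
  finally show ?thesis unfolding Kf_def .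
qed

lemma Kf_mono: assumes "h > 0" "norm p \<le> norm q" shows "Kf h q \<le> Kf h p"
proof -
  have "(norm p ^ 2 + h ^ 2) powr (3/2) \<le> (norm q ^ 2 + h ^ 2) powr (3/2)"
    using assms by (intro powr_mono2) (auto intro: power_mono)
  then show ?thesis unfolding Kf_def using assms
    by (intro divide_left_mono) (auto simp: add_nonneg_pos)
qed

lemma Kf_strict_mono: assumes "h > 0" "norm p < norm q" shows "Kf h q < Kf h p"
proof -
  have "(norm p ^ 2 + h ^ 2) powr (3/2) < (norm q ^ 2 + h ^ 2) powr (3/2)"
    using assms by (intro powr_less_mono2) (auto intro: power_strict_mono)
  then show ?thesis unfolding Kf_def using assms
    by (intro divide_strict_left_mono) (auto simp: add_nonneg_pos)
qed

lemma Kf_decay: assumes "h > 0" "R > 0" "norm p \<ge> R" shows "Kf h p \<le> h / R^3"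
proof -
  have "R^2 \<le> norm p ^ 2" using assms by (intro power_mono) auto
  then have "R^2 \<le> norm p ^ 2 + h ^ 2" using zero_le_power2[of h] by linarith
  then have "(R^2) powr (3/2) \<le> (norm p ^ 2 + h ^ 2) powr (3/2)"
    by (intro powr_mono2) simp_all
  moreover have "(R^2) powr (3/2) = R^3"
  proof -
    have "(R^2) powr (3/2) = (R powr 2) powr (3/2)" using assms by simp
    also have "\<dots> = R powr 3" by (simp only: powr_powr) simp
    also have "\<dots> = R^3" using assms by simp
    finally show ?thesis .
  qed
  ultimately show ?thesis using assms unfolding Kf_def
    by (intro divide_left_mono) (auto simp: add_nonneg_pos)
qed

lemma cont_Kf: assumes "h > 0" shows "continuous_on S (Kf h)"
  unfolding Kf_def using assms
  by (intro continuous_intros) (auto simp: add_pos_nonneg)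

lemma absint_Kf: assumes "compact S" "h > 0"
  shows "(\<lambda>y. Kf h (y - x)) absolutely_integrable_on S"
  by (rule absint_cont_compact[OF assms(1)])
     (use assms(2) in \<open>unfold Kf_def, intro continuous_intros, auto simp: add_pos_nonneg\<close>)

lemma solid_angle_Kf: "solid_angle \<Omega> h x = integral \<Omega> (\<lambda>y. Kf h (y - x))"
  unfolding solid_angle_def Kf_def by simp



lemma integral_pos:
  fixes f g :: "real^2 \<Rightarrow> real"
  assumes f: "f integrable_on S" and nn: "\<And>y. y \<in> S \<Longrightarrow> 0 \<le> f y"
    and U: "open U" "U \<subseteq> S" "U \<noteq> {}"
    and eq: "\<And>y. y \<in> U \<Longrightarrow> f y = g y" and g: "continuous_on U g" "\<And>y. y \<in> U \<Longrightarrow> g y > 0"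
  shows "integral S f > 0"
proof -
  obtain p where p: "p \<in> U" using U by blast
  obtain a b where ab: "cbox a b \<subseteq> U" "p \<in> box a b" "\<forall>i\<in>Basis. a \<bullet> i < b \<bullet> i"
    using open_contains_cbox[OF U(1) p] by blast
  have ne: "cbox a b \<noteq> {}" using ab(3) box_ne_empty(1) by (meson less_imp_le)
  have gc: "continuous_on (cbox a b) g" using g(1) ab(1) continuous_on_subset by blast
  obtain m where m: "m \<in> cbox a b" "\<And>y. y \<in> cbox a b \<Longrightarrow> g m \<le> g y"
    using continuous_attains_inf[OF compact_cbox ne gc] by blast
  have gm: "g m > 0" using g(2) m(1) ab(1) by blast
  have cpos: "Henstock_Kurzweil_Integration.content (cbox a b) > 0" using ab(3) content_pos_lt_eq by blast
  have gi: "g integrable_on cbox a b" by (rule integrable_continuous[OF gc])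
  have fi: "f integrable_on cbox a b"
    by (rule integrable_eq[OF gi]) (use eq ab(1) in force)
  have "0 < Henstock_Kurzweil_Integration.content (cbox a b) * g m" using cpos gm by simp
  also have "\<dots> = integral (cbox a b) (\<lambda>_. g m)" by simp
  also have "\<dots> \<le> integral (cbox a b) g"
    by (rule integral_le) (use gi m in auto)
  also have "\<dots> = integral (cbox a b) f"
    by (rule integral_cong) (use eq ab(1) in auto)
  also have "\<dots> \<le> integral S f"
    by (rule integral_subset_le) (use ab(1) U(2) fi f nn in auto)
  finally show ?thesis .
qed



lemma midpoint_concave_1d:
  fixes g G1 G2 :: "real \<Rightarrow> real"
  assumes d1: "\<And>t. (g has_real_derivative G1 t) (at t)"
    and d2: "\<And>t. (G1 has_real_derivative G2 t) (at t)"
    and s: "\<And>t. 0 \<le> t \<Longrightarrow> t \<le> 1 \<Longrightarrow> G2 t \<le> 0"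
  shows "g 0 + g 1 \<le> 2 * g (1/2)"
proof -
  obtain z1 where z1: "0 < z1" "z1 < 1/2" "g (1/2) - g 0 = (1/2 - 0) * G1 z1"
    using MVT2[of 0 "1/2" g G1] d1 by auto
  obtain z2 where z2: "1/2 < z2" "z2 < 1" "g 1 - g (1/2) = (1 - 1/2) * G1 z2"
    using MVT2[of "1/2" 1 g G1] d1 by auto
  have "G1 z2 \<le> G1 z1"
    by (rule DERIV_nonpos_imp_nonincreasing[of z1 z2 G1]) (use z1 z2 d2 s in \<open>auto intro!: exI[of _ "G2 _"]\<close>)
  then show ?thesis using z1 z2 by simp
qed

lemma midpoint_concave_1d_strict:
  fixes g G1 G2 :: "real \<Rightarrow> real"
  assumes d1: "\<And>t. (g has_real_derivative G1 t) (at t)"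
    and d2: "\<And>t. (G1 has_real_derivative G2 t) (at t)"
    and s: "\<And>t. 0 \<le> t \<Longrightarrow> t \<le> 1 \<Longrightarrow> G2 t < 0"
  shows "g 0 + g 1 < 2 * g (1/2)"
proof -
  obtain z1 where z1: "0 < z1" "z1 < 1/2" "g (1/2) - g 0 = (1/2 - 0) * G1 z1"
    using MVT2[of 0 "1/2" g G1] d1 by auto
  obtain z2 where z2: "1/2 < z2" "z2 < 1" "g 1 - g (1/2) = (1 - 1/2) * G1 z2"
    using MVT2[of "1/2" 1 g G1] d1 by auto
  have "G1 z2 < G1 z1"
    by (rule DERIV_neg_imp_decreasing[of z1 z2 G1]) (use z1 z2 d2 s in \<open>auto intro!: exI[of _ "G2 _"]\<close>)
  then show ?thesis using z1 z2 by simp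
qed

lemma deriv_test:
  fixes a b c h :: real
  assumes w: "\<And>t. a - 2*b*t + c*t^2 + h^2 > 0"
  shows "((\<lambda>t. h * (a - 2*b*t + c*t^2 + h^2) powr (-3/2)) has_real_derivative
     (-3 * h * (c*t - b) * (a - 2*b*t + c*t^2 + h^2) powr (-5/2))) (at t)"
  using w[of t]
  apply (auto intro!: derivative_eq_intros)
  done


lemma deriv_test2:
  fixes a b c h :: real
  assumes w: "\<And>t. a - 2*b*t + c*t^2 + h^2 > 0"
  shows "((\<lambda>t. -3 * h * (c*t - b) * (a - 2*b*t + c*t^2 + h^2) powr (-5/2)) has_real_derivative
     (-3 * h * (c * (a - 2*b*t + c*t^2 + h^2) powr (-5/2) + (c*t - b) * ((-5/2) * (a - 2*b*t + c*t^2 + h^2) powr (-7/2) * (2*c*t - 2*b))))) (at t)"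
  using w[of t]
  apply (auto intro!: derivative_eq_intros)
  apply (simp add: field_simps)
  done

lemma sign_G2:
  fixes a b c h t :: real
  assumes h: "h > 0" and W: "W = q + h^2" and q: "0 \<le> q" "q \<le> h^2/4" and c: "c \<ge> 0"
    and cs: "(c*t - b)^2 \<le> q * c"
  shows "-3 * h * (c * W powr (-5/2) + (c*t - b) * ((-5/2) * W powr (-7/2) * (2*c*t - 2*b))) \<le> 0"
proof -
  have Wp: "W > 0" using W q h by (smt (verit) zero_less_power2)
  have "W powr (-5/2) = W powr (1 + (-7/2))" by simp
  also have "\<dots> = W powr 1 * W powr (-7/2)" by (rule powr_add)
  finally have e: "W powr (-5/2) = W * W powr (-7/2)" using Wp by simp
  have 1: "q * c \<le> (h^2/4) * c" by (rule mult_right_mono) (use q c in auto)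
  have 2: "c * W = q * c + (h^2/4) * c * 4" using W by (simp add: algebra_simps)
  have "c * W - 5 * (c*t - b)^2 \<ge> 0" using 1 2 cs by linarith
  then have "0 \<le> (c * W - 5 * (c*t - b)^2) * W powr (-7/2)" using Wp by simp
  then have "0 \<le> 3 * h * ((c * W - 5 * (c*t - b)^2) * W powr (-7/2))" using h by simp
  moreover have "-3 * h * (c * W powr (-5/2) + (c*t - b) * ((-5/2) * W powr (-7/2) * (2*c*t - 2*b)))
      = - (3 * h * ((c * W - 5 * (c*t - b)^2) * W powr (-7/2)))"
    unfolding e by (simp add: power2_eq_square field_simps)
  ultimately show ?thesis by linarith
qed

lemma sign_G2_strict:
  fixes a b c h t :: real
  assumes h: "h > 0" and W: "W = q + h^2" and q: "0 \<le> q" "q < h^2/4" and c: "c > 0"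
    and cs: "(c*t - b)^2 \<le> q * c"
  shows "-3 * h * (c * W powr (-5/2) + (c*t - b) * ((-5/2) * W powr (-7/2) * (2*c*t - 2*b))) < 0"
proof -
  have Wp: "W > 0" using W q h by (smt (verit) zero_less_power2)
  have "W powr (-5/2) = W powr (1 + (-7/2))" by simp
  also have "\<dots> = W powr 1 * W powr (-7/2)" by (rule powr_add)
  finally have e: "W powr (-5/2) = W * W powr (-7/2)" using Wp by simp
  have 1: "q * c < (h^2/4) * c" by (rule mult_strict_right_mono) (use q c in auto)
  have 2: "c * W = q * c + (h^2/4) * c * 4" using W by (simp add: algebra_simps)
  have "c * W - 5 * (c*t - b)^2 > 0" using 1 2 cs by linarith
  then have "0 < (c * W - 5 * (c*t - b)^2) * W powr (-7/2)" using Wp by simp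
  then have "0 < 3 * h * ((c * W - 5 * (c*t - b)^2) * W powr (-7/2))" using h by simp
  moreover have "-3 * h * (c * W powr (-5/2) + (c*t - b) * ((-5/2) * W powr (-7/2) * (2*c*t - 2*b)))
      = - (3 * h * ((c * W - 5 * (c*t - b)^2) * W powr (-7/2)))"
    unfolding e by (simp add: power2_eq_square field_simps)
  ultimately show ?thesis by linarith
qed


lemma Kf_line:
  "Kf h (p - t *\<^sub>R D) = h * (p \<bullet> p - 2*(p \<bullet> D)*t + (D \<bullet> D)*t^2 + h^2) powr (-3/2)"
proof -
  have "norm (p - t *\<^sub>R D) ^ 2 = (p - t *\<^sub>R D) \<bullet> (p - t *\<^sub>R D)" by (rule power2_norm_eq_inner)
  also have "\<dots> = p \<bullet> p - 2*(p \<bullet> D)*t + (D \<bullet> D)*t^2"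
    by (simp add: inner_diff_left inner_diff_right inner_commute[of D p] power2_eq_square algebra_simps)
  finally have "norm (p - t *\<^sub>R D) ^ 2 = p \<bullet> p - 2*(p \<bullet> D)*t + (D \<bullet> D)*t^2" .
  moreover have e: "(-3/2::real) = -(3/2)" by simp
  ultimately show ?thesis unfolding Kf_def e powr_minus by (simp only: divide_inverse)
qed

lemma Kf_aux:
  fixes p D :: "real^2"
  assumes h: "h > 0"
  defines "a \<equiv> p \<bullet> p" and "b \<equiv> p \<bullet> D" and "c \<equiv> D \<bullet> D"
  shows "\<And>t. a - 2*b*t + c*t^2 = norm (p - t *\<^sub>R D) ^ 2"
    and "\<And>t. a - 2*b*t + c*t^2 + h^2 > 0"
    and "\<And>t. (c*t - b)^2 \<le> norm (p - t *\<^sub>R D) ^ 2 * c"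
proof -
  show e: "a - 2*b*t + c*t^2 = norm (p - t *\<^sub>R D) ^ 2" for t
  proof -
    have "norm (p - t *\<^sub>R D) ^ 2 = (p - t *\<^sub>R D) \<bullet> (p - t *\<^sub>R D)" by (rule power2_norm_eq_inner)
    also have "\<dots> = a - 2*b*t + c*t^2"
      by (simp add: a_def b_def c_def inner_diff_left inner_diff_right inner_commute[of D p] power2_eq_square algebra_simps)
    finally show ?thesis by simp
  qed
  show "a - 2*b*t + c*t^2 + h^2 > 0" for t unfolding e using h by (simp add: add_nonneg_pos)
  show "(c*t - b)^2 \<le> norm (p - t *\<^sub>R D) ^ 2 * c" for t
  proof -
    have "(p - t *\<^sub>R D) \<bullet> D = b - c*t"
      by (simp add: b_def c_def inner_diff_left)
    then have "(c*t - b)^2 = ((p - t *\<^sub>R D) \<bullet> D)^2" by (simp add: power2_commute)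
    also have "\<dots> \<le> ((p - t *\<^sub>R D) \<bullet> (p - t *\<^sub>R D)) * (D \<bullet> D)" by (rule Cauchy_Schwarz_ineq)
    finally show ?thesis by (simp add: c_def power2_norm_eq_inner)
  qed
qed

lemma Kf_mid:
  fixes p D :: "real^2"
  assumes h: "h > 0" and bnd: "\<And>t. 0 \<le> t \<Longrightarrow> t \<le> 1 \<Longrightarrow> norm (p - t *\<^sub>R D) \<le> h/2"
  shows "Kf h p + Kf h (p - D) \<le> 2 * Kf h (p - (1/2) *\<^sub>R D)"
proof -
  define a b c where "a = p \<bullet> p" and "b = p \<bullet> D" and "c = D \<bullet> D"
  note aux = Kf_aux[OF h, where p=p and D=D, folded a_def b_def c_def]
  define g where "g t = h * (a - 2*b*t + c*t^2 + h^2) powr (-3/2)" for t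
  have gK: "Kf h (p - t *\<^sub>R D) = g t" for t unfolding g_def Kf_line a_def b_def c_def ..
  have "g 0 + g 1 \<le> 2 * g (1/2)"
  proof (rule midpoint_concave_1d)
    show "(g has_real_derivative (-3 * h * (c*t - b) * (a - 2*b*t + c*t^2 + h^2) powr (-5/2))) (at t)" for t
      unfolding g_def by (rule deriv_test[OF aux(2)])
    show "((\<lambda>t. -3 * h * (c*t - b) * (a - 2*b*t + c*t^2 + h^2) powr (-5/2)) has_real_derivative
     (-3 * h * (c * (a - 2*b*t + c*t^2 + h^2) powr (-5/2) + (c*t - b) * ((-5/2) * (a - 2*b*t + c*t^2 + h^2) powr (-7/2) * (2*c*t - 2*b))))) (at t)" for t
      by (rule deriv_test2[OF aux(2)])
    fix t :: real assume t: "0 \<le> t" "t \<le> 1"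
    have nb: "norm (p - t *\<^sub>R D) ^ 2 \<le> (h/2)^2"
      using bnd[OF t] by (intro power_mono) auto
    show "-3 * h * (c * (a - 2*b*t + c*t^2 + h^2) powr (-5/2) + (c*t - b) * ((-5/2) * (a - 2*b*t + c*t^2 + h^2) powr (-7/2) * (2*c*t - 2*b))) \<le> 0"
    proof (rule sign_G2[OF h refl])
      show "0 \<le> a - 2*b*t + c*t^2" unfolding aux(1) by simp
      show "a - 2*b*t + c*t^2 \<le> h^2/4" unfolding aux(1) using nb by (simp add: power_divide)
      show "0 \<le> c" by (simp add: c_def)
      show "(c*t - b)^2 \<le> (a - 2*b*t + c*t^2) * c" unfolding aux(1) by (rule aux(3))
    qed
  qed
  then show ?thesis using gK[of 0] gK[of 1] gK[of "1/2"] by simp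
qed

lemma Kf_mid_strict:
  fixes p D :: "real^2"
  assumes h: "h > 0" and D: "D \<noteq> 0" and bnd: "\<And>t. 0 \<le> t \<Longrightarrow> t \<le> 1 \<Longrightarrow> norm (p - t *\<^sub>R D) < h/2"
  shows "Kf h p + Kf h (p - D) < 2 * Kf h (p - (1/2) *\<^sub>R D)"
proof -
  define a b c where "a = p \<bullet> p" and "b = p \<bullet> D" and "c = D \<bullet> D"
  note aux = Kf_aux[OF h, where p=p and D=D, folded a_def b_def c_def]
  have cpos: "c > 0" using D by (simp add: c_def)
  define g where "g t = h * (a - 2*b*t + c*t^2 + h^2) powr (-3/2)" for t
  have gK: "Kf h (p - t *\<^sub>R D) = g t" for t unfolding g_def Kf_line a_def b_def c_def ..
  have "g 0 + g 1 < 2 * g (1/2)"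
  proof (rule midpoint_concave_1d_strict)
    show "(g has_real_derivative (-3 * h * (c*t - b) * (a - 2*b*t + c*t^2 + h^2) powr (-5/2))) (at t)" for t
      unfolding g_def by (rule deriv_test[OF aux(2)])
    show "((\<lambda>t. -3 * h * (c*t - b) * (a - 2*b*t + c*t^2 + h^2) powr (-5/2)) has_real_derivative
     (-3 * h * (c * (a - 2*b*t + c*t^2 + h^2) powr (-5/2) + (c*t - b) * ((-5/2) * (a - 2*b*t + c*t^2 + h^2) powr (-7/2) * (2*c*t - 2*b))))) (at t)" for t
      by (rule deriv_test2[OF aux(2)])
    fix t :: real assume t: "0 \<le> t" "t \<le> 1"
    have nb: "norm (p - t *\<^sub>R D) ^ 2 < (h/2)^2"
      using bnd[OF t] by (intro power_strict_mono) auto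
    show "-3 * h * (c * (a - 2*b*t + c*t^2 + h^2) powr (-5/2) + (c*t - b) * ((-5/2) * (a - 2*b*t + c*t^2 + h^2) powr (-7/2) * (2*c*t - 2*b))) < 0"
    proof (rule sign_G2_strict[OF h refl])
      show "0 \<le> a - 2*b*t + c*t^2" unfolding aux(1) by simp
      show "a - 2*b*t + c*t^2 < h^2/4" unfolding aux(1) using nb by (simp add: power_divide)
      show "0 < c" by (rule cpos)
      show "(c*t - b)^2 \<le> (a - 2*b*t + c*t^2) * c" unfolding aux(1) by (rule aux(3))
    qed
  qed
  then show ?thesis using gK[of 0] gK[of 1] gK[of "1/2"] by simp
qed




definition Lrefl :: "real^2 \<Rightarrow> real^2 \<Rightarrow> real^2" where
  "Lrefl v z = z - (2 * (z \<bullet> v)) *\<^sub>R v"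

lemma refl_line_L: "refl_line v c z = Lrefl v z + (2*c) *\<^sub>R v"
  unfolding refl_line_def Lrefl_def by (simp add: algebra_simps)

lemma Lrefl_orth: assumes "norm v = 1" shows "orthogonal_transformation (Lrefl v)"
proof -
  have vv: "v \<bullet> v = 1" using assms by (simp add: norm_eq_1)
  have lin: "linear (Lrefl v)"
    unfolding Lrefl_def by (intro linearI) (auto simp: algebra_simps inner_add_left)
  show ?thesis unfolding orthogonal_transformation_def
  proof (intro conjI allI lin)
    fix a b :: "real^2"
    show "Lrefl v a \<bullet> Lrefl v b = a \<bullet> b"
      unfolding Lrefl_def using vv
      by (simp add: inner_diff_left inner_diff_right inner_commute[of v b] inner_commute[of v a] algebra_simps)
  qed
qed

lemma refl_inner: assumes "norm v = 1" shows "refl_line v c z \<bullet> v = 2*c - z \<bullet> v"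
proof -
  have vv: "v \<bullet> v = 1" using assms by (simp add: norm_eq_1)
  show ?thesis unfolding refl_line_def using vv by (simp add: inner_diff_left algebra_simps)
qed

lemma refl_invol: assumes "norm v = 1" shows "refl_line v c (refl_line v c z) = z"
proof -
  have "refl_line v c (refl_line v c z) = refl_line v c z - (2 * (refl_line v c z \<bullet> v - c)) *\<^sub>R v"
    unfolding refl_line_def[of v c "refl_line v c z"] ..
  also have "\<dots> = z" unfolding refl_inner[OF assms] unfolding refl_line_def by (simp add: algebra_simps)
  finally show ?thesis .
qed

lemma refl_dist: assumes "norm v = 1" shows "norm (refl_line v c z - refl_line v c w) = norm (z - w)"
proof -
  have "refl_line v c z - refl_line v c w = Lrefl v (z - w)"
    unfolding refl_line_L using Lrefl_orth[OF assms] orthogonal_transformation_linear linear_diff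
    by (metis add_diff_cancel_right)
  then show ?thesis using Lrefl_orth[OF assms] orthogonal_transformation_norm by metis
qed

lemma refl_sq: assumes "norm v = 1"
  shows "norm (refl_line v c z - x)^2 = norm (z - x)^2 + 4 * (z \<bullet> v - c) * (x \<bullet> v - c)"
proof -
  have vv: "v \<bullet> v = 1" using assms by (simp add: norm_eq_1)
  have e: "refl_line v c z - x = (z - x) - (2 * (z \<bullet> v - c)) *\<^sub>R v" unfolding refl_line_def by simp
  have "norm (refl_line v c z - x)^2 = (refl_line v c z - x) \<bullet> (refl_line v c z - x)"
    by (rule power2_norm_eq_inner)
  also have "\<dots> = ((z - x) - (2 * (z \<bullet> v - c)) *\<^sub>R v) \<bullet> ((z - x) - (2 * (z \<bullet> v - c)) *\<^sub>R v)"
    by (simp only: e)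
  also have "\<dots> = (z - x) \<bullet> (z - x) - 4 * (z \<bullet> v - c) * ((z - x) \<bullet> v) + 4 * (z \<bullet> v - c)^2"
    using vv by (simp add: inner_diff_left inner_diff_right inner_commute[of v "z - x"] inner_commute[of v z] inner_commute[of v x] power2_eq_square algebra_simps)
  also have "\<dots> = norm (z - x)^2 + 4 * (z \<bullet> v - c) * (x \<bullet> v - c)"
    unfolding power2_norm_eq_inner[symmetric] by (simp add: inner_diff_left power2_eq_square algebra_simps)
  finally show ?thesis .
qed

lemma Lrefl_linear: "linear (Lrefl v)"
  unfolding Lrefl_def by (intro linearI) (auto simp: algebra_simps inner_add_left)

lemma refl_cont: "continuous_on S (refl_line v c)"
proof -
  have e: "refl_line v c = (\<lambda>z. Lrefl v z + (2*c) *\<^sub>R v)" by (rule ext) (simp add: refl_line_L)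
  have "continuous_on S (Lrefl v)"
    by (rule linear_continuous_on) (simp add: Lrefl_linear linear_conv_bounded_linear[symmetric])
  then show ?thesis unfolding e by (intro continuous_on_add continuous_on_const)
qed

lemma cov:
  fixes f :: "real^2 \<Rightarrow> real" and L :: "real^2 \<Rightarrow> real^2"
  assumes L: "orthogonal_transformation L" and f: "f absolutely_integrable_on UNIV"
  shows "(\<lambda>x. f (L x + b)) absolutely_integrable_on UNIV \<and> integral UNIV (\<lambda>x. f (L x + b)) = integral UNIV f"
proof -
  let ?F = "\<lambda>y. (vec (f y) :: real^1)"
  have surj: "(\<lambda>x. L x + b) ` UNIV = UNIV"
  proof -
    have "surj L" using L orthogonal_transformation_surj by blast
    have "y \<in> range (\<lambda>x. L x + b)" for y
    proof -
      obtain x where "y - b = L x" using surjD[OF \<open>surj L\<close>] by blast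
      then have "y = L x + b" by (simp add: algebra_simps)
      then show ?thesis by blast
    qed
    then show ?thesis by blast
  qed
  have inj: "inj_on (\<lambda>x. L x + b) UNIV"
    using orthogonal_transformation_inj[OF L] by (auto simp: inj_on_def)
  have der: "((\<lambda>x. L x + b) has_derivative L) (at x within UNIV)" for x
    using L orthogonal_transformation_linear
    by (auto intro!: derivative_eq_intros linear_imp_has_derivative)
  have FF: "?F absolutely_integrable_on UNIV"
    using f by (simp add: absolutely_integrable_on_1_iff)
  have "(\<lambda>x. \<bar>det (matrix L)\<bar> *\<^sub>R ?F ((\<lambda>x. L x + b) x)) absolutely_integrable_on UNIV \<and>
           integral UNIV (\<lambda>x. \<bar>det (matrix L)\<bar> *\<^sub>R ?F ((\<lambda>x. L x + b) x)) = vec (integral UNIV f)"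
    apply (rule has_absolute_integral_change_of_variables[of UNIV "\<lambda>x. L x + b" "\<lambda>_. L", THEN iffD2])
    using der inj surj FF by (auto simp: integral_on_1_eq)
  then show ?thesis using L
    by (auto simp: absolutely_integrable_on_1_iff integral_on_1_eq vec_eq_iff)
qed

lemma cov_refl:
  fixes f :: "real^2 \<Rightarrow> real"
  assumes v: "norm v = 1" and f: "f absolutely_integrable_on UNIV"
  shows "(\<lambda>x. f (refl_line v c x)) absolutely_integrable_on UNIV"
    and "integral UNIV (\<lambda>x. f (refl_line v c x)) = integral UNIV f"
  using cov[OF Lrefl_orth[OF v] f, of "(2*c) *\<^sub>R v"] unfolding refl_line_L[symmetric] by auto



lemma ai_int: "f absolutely_integrable_on S \<Longrightarrow> f integrable_on S" for f :: "real^2 \<Rightarrow> real"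
  using set_lebesgue_integral_eq_integral(1) by blast

lemma Kf_norm_eq: "norm p = norm q \<Longrightarrow> Kf h p = Kf h q"
  unfolding Kf_def by simp

lemma reflect_increase:
  fixes \<Omega> :: "(real^2) set" and x y0 v :: "real^2"
  assumes cpt: "compact \<Omega>" and h: "h > 0" and v: "norm v = 1"
    and cap: "\<And>z. z \<in> \<Omega> \<Longrightarrow> z \<bullet> v \<ge> c \<Longrightarrow> refl_line v c z \<in> \<Omega>"
    and xv: "x \<bullet> v > c"
    and y0: "y0 \<in> interior \<Omega>" "y0 \<bullet> v < c" "refl_line v c y0 \<notin> \<Omega>"
  shows "solid_angle \<Omega> h x < solid_angle \<Omega> h (refl_line v c x)"
proof -
  let ?I = "refl_line v c"
  define F where "F a z = (if z \<in> \<Omega> then Kf h (z - a) else 0)" for a z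
  have FI: "F a absolutely_integrable_on UNIV" for a
    unfolding F_def absolutely_integrable_restrict_UNIV by (rule absint_Kf[OF cpt h])
  have FA: "solid_angle \<Omega> h a = integral UNIV (F a)" for a
    unfolding F_def solid_angle_Kf integral_restrict_UNIV ..
  define \<psi> where "\<psi> z = (if ?I z \<in> \<Omega> then Kf h (z - x) else 0)" for z
  have \<psi>eq: "\<psi> = (\<lambda>z. F (?I x) (?I z))"
  proof
    fix z
    have "Kf h (?I z - ?I x) = Kf h (z - x)" by (rule Kf_norm_eq) (rule refl_dist[OF v])
    then show "\<psi> z = F (?I x) (?I z)" unfolding \<psi>_def F_def by simp
  qed
  have \<psi>I: "\<psi> absolutely_integrable_on UNIV" unfolding \<psi>eq by (rule cov_refl(1)[OF v FI])
  have \<psi>A: "integral UNIV \<psi> = solid_angle \<Omega> h (?I x)" unfolding \<psi>eq FA by (rule cov_refl(2)[OF v FI])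
  define D where "D z = \<psi> z - F x z" for z
  have DI: "D absolutely_integrable_on UNIV" unfolding D_def by (rule set_integral_diff(1)[OF \<psi>I FI])
  have DA: "integral UNIV D = solid_angle \<Omega> h (?I x) - solid_angle \<Omega> h x"
    unfolding D_def using integral_diff[OF ai_int[OF \<psi>I] ai_int[OF FI], of x] \<psi>A FA[of x] by simp
  have DII: "(\<lambda>z. D (?I z)) absolutely_integrable_on UNIV" by (rule cov_refl(1)[OF v DI])
  have DIA: "integral UNIV (\<lambda>z. D (?I z)) = integral UNIV D" by (rule cov_refl(2)[OF v DI])
  define \<phi> where "\<phi> z = D z + D (?I z)" for z
  have \<phi>A: "integral UNIV \<phi> = 2 * integral UNIV D"
    unfolding \<phi>_def using integral_add[OF ai_int[OF DI] ai_int[OF DII]] DIA by simp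
  have \<phi>I: "\<phi> integrable_on UNIV" unfolding \<phi>_def by (rule integrable_add[OF ai_int[OF DI] ai_int[OF DII]])
  have \<phi>form: "\<phi> z = (if ?I z \<in> \<Omega> then Kf h (z - x) else 0) - (if z \<in> \<Omega> then Kf h (z - x) else 0)
      + (if z \<in> \<Omega> then Kf h (?I z - x) else 0) - (if ?I z \<in> \<Omega> then Kf h (?I z - x) else 0)" for z
    unfolding \<phi>_def D_def \<psi>_def F_def refl_invol[OF v] by simp
  have nonneg: "0 \<le> \<phi> z" for z
  proof (cases "z \<bullet> v \<ge> c")
    case True
    have "norm (?I z - x)^2 \<ge> norm (z - x)^2"
      unfolding refl_sq[OF v] using True xv by (simp add: mult_nonneg_nonneg)
    then have "norm (z - x) \<le> norm (?I z - x)" by (rule power2_le_imp_le) simp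
    then have K: "Kf h (?I z - x) \<le> Kf h (z - x)" by (rule Kf_mono[OF h])
    have "z \<in> \<Omega> \<Longrightarrow> ?I z \<in> \<Omega>" using cap True by blast
    then show ?thesis unfolding \<phi>form using K by auto
  next
    case False
    have "norm (?I z - x)^2 < norm (z - x)^2"
    proof -
      have "(z \<bullet> v - c) * (x \<bullet> v - c) < 0" using False xv by (intro mult_neg_pos) auto
      then show ?thesis unfolding refl_sq[OF v] mult.assoc by linarith
    qed
    then have "norm (?I z - x) < norm (z - x)" by (rule power2_less_imp_less) simp
    then have K: "Kf h (z - x) < Kf h (?I z - x)" by (rule Kf_strict_mono[OF h])
    have "?I z \<in> \<Omega> \<Longrightarrow> z \<in> \<Omega>"
    proof -
      assume "?I z \<in> \<Omega>"
      moreover have "?I z \<bullet> v \<ge> c" unfolding refl_inner[OF v] using False by simp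
      ultimately have "?I (?I z) \<in> \<Omega>" using cap by blast
      then show "z \<in> \<Omega>" unfolding refl_invol[OF v] .
    qed
    then show ?thesis unfolding \<phi>form using K by auto
  qed
  define U where "U = interior \<Omega> \<inter> {z. v \<bullet> z < c} \<inter> - (?I -` \<Omega>)"
  have "integral UNIV \<phi> > 0"
  proof (rule integral_pos[OF \<phi>I, of U "\<lambda>z. Kf h (?I z - x) - Kf h (z - x)"])
    show "0 \<le> \<phi> z" for z by (rule nonneg)
    have "closed \<Omega>" using cpt compact_imp_closed by blast
    then have "closed (?I -` \<Omega>)" by (intro closed_vimage refl_cont)
    then show "open U" unfolding U_def by (intro open_Int open_interior open_halfspace_lt open_Compl)
    show "U \<subseteq> UNIV" by simp
    show "U \<noteq> {}" using y0 unfolding U_def by (auto simp: inner_commute)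
    show "\<phi> y = Kf h (?I y - x) - Kf h (y - x)" if "y \<in> U" for y
      using that interior_subset[of \<Omega>] unfolding U_def \<phi>form by auto
    show "continuous_on U (\<lambda>z. Kf h (?I z - x) - Kf h (z - x))"
      using h unfolding Kf_def
      by (intro continuous_intros refl_cont) (auto simp: add_pos_nonneg)
    show "0 < Kf h (?I y - x) - Kf h (y - x)" if "y \<in> U" for y
    proof -
      have yv: "y \<bullet> v < c" using that unfolding U_def by (auto simp: inner_commute)
      have "norm (?I y - x)^2 < norm (y - x)^2"
      proof -
        have "(y \<bullet> v - c) * (x \<bullet> v - c) < 0" using yv xv by (intro mult_neg_pos) auto
        then show ?thesis unfolding refl_sq[OF v] mult.assoc by linarith
      qed
      then have "norm (?I y - x) < norm (y - x)" by (rule power2_less_imp_less) simp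
      then show ?thesis using Kf_strict_mono[OF h] by simp
    qed
  qed
  then show ?thesis using \<phi>A DA by simp
qed



definition capS :: "(real^2) set \<Rightarrow> real^2 \<Rightarrow> real set" where
  "capS \<Omega> v = {b. \<forall>c\<ge>b. refl_line v c ` cap_plus \<Omega> v c \<subseteq> \<Omega>}"

lemma uf_upper_capS: "uf_upper \<Omega> v = Inf (capS \<Omega> v)"
  unfolding uf_upper_def capS_def ..

lemma capS_props:
  assumes cpt: "compact \<Omega>" and ne: "\<Omega> \<noteq> {}" and v: "norm v = 1"
  shows "capS \<Omega> v \<noteq> {}" "bdd_below (capS \<Omega> v)"
proof -
  have ci: "continuous_on \<Omega> (\<lambda>z. z \<bullet> v)" by (intro continuous_intros)
  obtain zhi where zhi: "zhi \<in> \<Omega>" "\<And>z. z \<in> \<Omega> \<Longrightarrow> z \<bullet> v \<le> zhi \<bullet> v"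
    using continuous_attains_sup[OF cpt ne ci] by blast
  obtain zlo where zlo: "zlo \<in> \<Omega>" "\<And>z. z \<in> \<Omega> \<Longrightarrow> zlo \<bullet> v \<le> z \<bullet> v"
    using continuous_attains_inf[OF cpt ne ci] by blast
  have "zhi \<bullet> v + 1 \<in> capS \<Omega> v"
  proof -
    have "cap_plus \<Omega> v c = {}" if "c \<ge> zhi \<bullet> v + 1" for c
      using zhi(2) that unfolding cap_plus_def by force
    then show ?thesis unfolding capS_def by auto
  qed
  then show "capS \<Omega> v \<noteq> {}" by blast
  show "bdd_below (capS \<Omega> v)"
  proof (rule bdd_belowI)
    fix b assume b: "b \<in> capS \<Omega> v"
    show "(zlo \<bullet> v + zhi \<bullet> v) / 2 \<le> b"
    proof (rule ccontr)
      assume "\<not> ?thesis"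
      then have lt: "b < (zlo \<bullet> v + zhi \<bullet> v) / 2" by simp
      have "zhi \<in> cap_plus \<Omega> v b" unfolding cap_plus_def using zhi zlo(2)[OF zhi(1)] lt by auto
      moreover have "refl_line v b ` cap_plus \<Omega> v b \<subseteq> \<Omega>" using b unfolding capS_def by auto
      ultimately have "refl_line v b zhi \<in> \<Omega>" by blast
      then have "zlo \<bullet> v \<le> refl_line v b zhi \<bullet> v" by (rule zlo(2))
      then show False unfolding refl_inner[OF v] using lt by simp
    qed
  qed
qed

lemma cap_below_uf:
  assumes cpt: "compact \<Omega>" and ne: "\<Omega> \<noteq> {}" and v: "norm v = 1"
    and lt: "uf_upper \<Omega> v < c"
  shows "\<And>z. z \<in> \<Omega> \<Longrightarrow> z \<bullet> v \<ge> c \<Longrightarrow> refl_line v c z \<in> \<Omega>"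
proof -
  obtain b where b: "b \<in> capS \<Omega> v" "b < c"
    using lt capS_props[OF cpt ne v] unfolding uf_upper_capS by (meson cInf_less_iff)
  then have "refl_line v c ` cap_plus \<Omega> v c \<subseteq> \<Omega>" unfolding capS_def by auto
  then show "\<And>z. z \<in> \<Omega> \<Longrightarrow> z \<bullet> v \<ge> c \<Longrightarrow> refl_line v c z \<in> \<Omega>"
    unfolding cap_plus_def by blast
qed



lemma refl_interior:
  fixes \<Omega> T :: "(real^2) set"
  assumes v: "norm v = 1" and y: "y \<in> T" and T: "open T"
    and R: "\<And>w. w \<in> T \<Longrightarrow> refl_line v c w \<in> \<Omega>"
  shows "refl_line v c y \<in> interior \<Omega>"
proof -
  obtain r where r: "r > 0" "ball y r \<subseteq> T" using T y open_contains_ball by blast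
  have "ball (refl_line v c y) r \<subseteq> \<Omega>"
  proof
    fix w assume w: "w \<in> ball (refl_line v c y) r"
    have "dist y (refl_line v c w) = dist (refl_line v c (refl_line v c y)) (refl_line v c w)"
      unfolding refl_invol[OF v] ..
    also have "\<dots> = dist (refl_line v c y) w" unfolding dist_norm by (rule refl_dist[OF v])
    finally have "refl_line v c w \<in> ball y r" using w by (simp add: dist_commute)
    then have "refl_line v c (refl_line v c w) \<in> \<Omega>" using R r(2) by blast
    then show "w \<in> \<Omega>" unfolding refl_invol[OF v] .
  qed
  then show ?thesis using r(1) mem_interior by blast
qed

lemma refl_twice:
  assumes v: "norm v = 1"
  shows "refl_line v c1 (refl_line v c2 y) = y - (2 * (c2 - c1)) *\<^sub>R v"
proof -
  have "refl_line v c1 (refl_line v c2 y) = refl_line v c2 y - (2 * (refl_line v c2 y \<bullet> v - c1)) *\<^sub>R v"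
    unfolding refl_line_def[of v c1 "refl_line v c2 y"] ..
  also have "\<dots> = y - ((2*(y \<bullet> v - c2)) + (2*((2*c2 - y \<bullet> v) - c1))) *\<^sub>R v"
    unfolding refl_inner[OF v] unfolding refl_line_def by (simp only: scaleR_add_left diff_diff_eq)
  also have "\<dots> = y - (2 * (c2 - c1)) *\<^sub>R v"
    by (rule arg_cong[where f="\<lambda>t. y - t *\<^sub>R v"]) simp
  finally show ?thesis .
qed

lemma descent_false:
  fixes \<Omega> :: "(real^2) set"
  assumes bnd: "bounded \<Omega>" and int: "interior \<Omega> \<noteq> {}" and v: "norm v = 1" and c12: "c1 < c2"
    and cap1: "\<And>z. z \<in> \<Omega> \<Longrightarrow> z \<bullet> v \<ge> c1 \<Longrightarrow> refl_line v c1 z \<in> \<Omega>"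
    and H: "\<And>y. y \<in> interior \<Omega> \<Longrightarrow> y \<bullet> v < c2 \<Longrightarrow> refl_line v c2 y \<in> \<Omega>"
  shows False
proof -
  have step1: "refl_line v c1 z \<in> interior \<Omega>" if "z \<in> interior \<Omega>" "z \<bullet> v > c1" for z
  proof (rule refl_interior[OF v, of z "interior \<Omega> \<inter> {w. v \<bullet> w > c1}"])
    show "z \<in> interior \<Omega> \<inter> {w. v \<bullet> w > c1}" using that by (simp add: inner_commute)
    show "open (interior \<Omega> \<inter> {w. v \<bullet> w > c1})" by (intro open_Int open_interior open_halfspace_gt)
    show "refl_line v c1 w \<in> \<Omega>" if "w \<in> interior \<Omega> \<inter> {w. v \<bullet> w > c1}" for w
      using that interior_subset[of \<Omega>] cap1[of w] by (auto simp: inner_commute[of v w])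
  qed
  have step2: "refl_line v c2 y \<in> interior \<Omega>" if "y \<in> interior \<Omega>" "y \<bullet> v < c2" for y
  proof (rule refl_interior[OF v, of y "interior \<Omega> \<inter> {w. v \<bullet> w < c2}"])
    show "y \<in> interior \<Omega> \<inter> {w. v \<bullet> w < c2}" using that by (simp add: inner_commute)
    show "open (interior \<Omega> \<inter> {w. v \<bullet> w < c2})" by (intro open_Int open_interior open_halfspace_lt)
    show "refl_line v c2 w \<in> \<Omega>" if "w \<in> interior \<Omega> \<inter> {w. v \<bullet> w < c2}" for w
      using that H by (auto simp: inner_commute)
  qed
  define d where "d = 2 * (c2 - c1)"
  have dpos: "d > 0" using c12 by (simp add: d_def)
  have step: "y - d *\<^sub>R v \<in> interior \<Omega> \<and> (y - d *\<^sub>R v) \<bullet> v < c2"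
    if "y \<in> interior \<Omega>" "y \<bullet> v < c2" for y
  proof -
    have z: "refl_line v c2 y \<in> interior \<Omega>" by (rule step2[OF that])
    have zv: "refl_line v c2 y \<bullet> v > c1" unfolding refl_inner[OF v] using that c12 by simp
    have "refl_line v c1 (refl_line v c2 y) \<in> interior \<Omega>" by (rule step1[OF z zv])
    then have "y - d *\<^sub>R v \<in> interior \<Omega>" unfolding refl_twice[OF v] d_def .
    moreover have "(y - d *\<^sub>R v) \<bullet> v < c2" using that dpos v by (simp add: inner_diff_left norm_eq_1)
    ultimately show ?thesis by blast
  qed
  obtain p where p: "p \<in> interior \<Omega>" using int by blast
  obtain y0 where y0: "y0 \<in> interior \<Omega>" "y0 \<bullet> v < c2"
  proof (cases "p \<bullet> v < c2")
    case True then show ?thesis using that p by blast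
  next
    case False
    then have "refl_line v c1 p \<in> interior \<Omega>" using step1[OF p] c12 by simp
    moreover have "refl_line v c1 p \<bullet> v < c2" unfolding refl_inner[OF v] using False c12 by simp
    ultimately show ?thesis using that by blast
  qed
  have all: "y0 - (real n * d) *\<^sub>R v \<in> interior \<Omega> \<and> (y0 - (real n * d) *\<^sub>R v) \<bullet> v < c2" for n
  proof (induction n)
    case 0 then show ?case using y0 by simp
  next
    case (Suc n)
    have eq: "y0 - (real (Suc n) * d) *\<^sub>R v = (y0 - (real n * d) *\<^sub>R v) - d *\<^sub>R v"
      by (simp add: algebra_simps)
    show ?case unfolding eq by (rule step[OF conjunct1[OF Suc.IH] conjunct2[OF Suc.IH]])
  qed
  obtain B where B: "\<And>z. z \<in> \<Omega> \<Longrightarrow> norm z \<le> B" using bnd bounded_iff by blast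
  obtain n where n: "B + norm y0 < real n * d" using reals_Archimedean3[OF dpos] by blast
  have "y0 - (real n * d) *\<^sub>R v \<in> \<Omega>" using all[of n] interior_subset by blast
  then have b1: "norm (y0 - (real n * d) *\<^sub>R v) \<le> B" by (rule B)
  have "norm ((real n * d) *\<^sub>R v) \<le> norm (y0 - (real n * d) *\<^sub>R v) + norm y0"
    by (metis add.commute norm_triangle_sub norm_minus_commute)
  moreover have "norm ((real n * d) *\<^sub>R v) = real n * d" using v dpos by simp
  ultimately show False using b1 n by linarith
qed

lemma max_upper:
  fixes \<Omega> :: "(real^2) set"
  assumes cpt: "compact \<Omega>" and int: "interior \<Omega> \<noteq> {}" and h: "h > 0" and v: "norm v = 1"
    and cen: "solid_angle_center \<Omega> h x"
  shows "x \<bullet> v \<le> uf_upper \<Omega> v"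
proof (rule ccontr)
  assume "\<not> ?thesis"
  then have lt: "uf_upper \<Omega> v < x \<bullet> v" by simp
  have ne: "\<Omega> \<noteq> {}" using int interior_subset by blast
  define u where "u = uf_upper \<Omega> v"
  define c1 where "c1 = u + (x \<bullet> v - u) / 3"
  define c2 where "c2 = u + 2 * (x \<bullet> v - u) / 3"
  have c1: "u < c1" using lt unfolding c1_def c2_def u_def by (simp add: field_simps)
  have c2: "c1 < c2" using lt unfolding c1_def c2_def u_def by (simp add: field_simps)
  have c3: "c2 < x \<bullet> v" using lt unfolding c1_def c2_def u_def by (simp add: field_simps)
  note c = c1 c2 c3
  note cap1 = cap_below_uf[OF cpt ne v, of c1] and cap2 = cap_below_uf[OF cpt ne v, of c2]
  show False
  proof (cases "\<exists>y0. y0 \<in> interior \<Omega> \<and> y0 \<bullet> v < c2 \<and> refl_line v c2 y0 \<notin> \<Omega>")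
    case True
    then obtain y0 where y0: "y0 \<in> interior \<Omega>" "y0 \<bullet> v < c2" "refl_line v c2 y0 \<notin> \<Omega>" by blast
    have "solid_angle \<Omega> h x < solid_angle \<Omega> h (refl_line v c2 x)"
      by (rule reflect_increase[OF cpt h v _ _ y0]) (use cap2 c u_def in auto)
    moreover have "solid_angle \<Omega> h (refl_line v c2 x) \<le> solid_angle \<Omega> h x"
      using cen unfolding solid_angle_center_def by blast
    ultimately show False by simp
  next
    case False
    show False
    proof (rule descent_false[OF compact_imp_bounded[OF cpt] int v c(2)])
      show "refl_line v c1 z \<in> \<Omega>" if "z \<in> \<Omega>" "c1 \<le> z \<bullet> v" for z
        using cap1 c that u_def by auto
      show "refl_line v c2 y \<in> \<Omega>" if "y \<in> interior \<Omega>" "y \<bullet> v < c2" for y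
        using False that by blast
    qed
  qed
qed



lemma refl_neg: "refl_line (-v) c = refl_line v (-c)"
  by (rule ext) (simp add: refl_line_def algebra_simps)

lemma cap_neg: "cap_plus \<Omega> (-v) c = cap_minus \<Omega> v (-c)"
  unfolding cap_plus_def cap_minus_def by auto

lemma uf_lower_eq: "uf_lower \<Omega> v = - uf_upper \<Omega> (-v)"
proof -
  let ?S = "{b. \<forall>c\<ge>b. refl_line (-v) c ` cap_plus \<Omega> (-v) c \<subseteq> \<Omega>}"
  let ?L = "{b. \<forall>c\<le>b. refl_line v c ` cap_minus \<Omega> v c \<subseteq> \<Omega>}"
  have "uminus ` ?S = ?L"
  proof (rule set_eqI)
    fix x :: real
    have "x \<in> uminus ` ?S \<longleftrightarrow> -x \<in> ?S"
    proof
      assume "x \<in> uminus ` ?S"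
      then obtain y where "y \<in> ?S" "x = -y" by blast
      then show "-x \<in> ?S" by simp
    next
      assume "-x \<in> ?S"
      then show "x \<in> uminus ` ?S" by (rule rev_image_eqI) simp
    qed
    also have "\<dots> \<longleftrightarrow> (\<forall>c\<ge>-x. refl_line v (-c) ` cap_minus \<Omega> v (-c) \<subseteq> \<Omega>)"
      by (simp add: refl_neg cap_neg)
    also have "\<dots> \<longleftrightarrow> (\<forall>c\<le>x. refl_line v c ` cap_minus \<Omega> v c \<subseteq> \<Omega>)"
    proof
      assume H: "\<forall>c\<ge>-x. refl_line v (-c) ` cap_minus \<Omega> v (-c) \<subseteq> \<Omega>"
      show "\<forall>c\<le>x. refl_line v c ` cap_minus \<Omega> v c \<subseteq> \<Omega>"
      proof (intro allI impI)
        fix c assume "c \<le> x"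
        then have "-c \<ge> -x" by simp
        then show "refl_line v c ` cap_minus \<Omega> v c \<subseteq> \<Omega>" using H by fastforce
      qed
    next
      assume H: "\<forall>c\<le>x. refl_line v c ` cap_minus \<Omega> v c \<subseteq> \<Omega>"
      show "\<forall>c\<ge>-x. refl_line v (-c) ` cap_minus \<Omega> v (-c) \<subseteq> \<Omega>"
      proof (intro allI impI)
        fix c assume "c \<ge> -x"
        then have "-c \<le> x" by simp
        then show "refl_line v (-c) ` cap_minus \<Omega> v (-c) \<subseteq> \<Omega>" using H by blast
      qed
    qed
    finally show "x \<in> uminus ` ?S \<longleftrightarrow> x \<in> ?L" by simp
  qed
  then show ?thesis unfolding uf_lower_def uf_upper_def Inf_real_def by simp
qed

lemma max_in_uf:
  fixes \<Omega> :: "(real^2) set"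
  assumes cpt: "compact \<Omega>" and int: "interior \<Omega> \<noteq> {}" and h: "h > 0"
    and cen: "solid_angle_center \<Omega> h x"
  shows "x \<in> unfolded_region \<Omega>"
  unfolding unfolded_region_def
proof (intro InterI, clarsimp)
  fix v :: "real^2" assume v: "norm v = 1"
  have "x \<bullet> (-v) \<le> uf_upper \<Omega> (-v)" by (rule max_upper[OF cpt int h _ cen]) (simp add: v)
  then show "uf_lower \<Omega> v \<le> x \<bullet> v \<and> x \<bullet> v \<le> uf_upper \<Omega> v"
    unfolding uf_lower_eq using max_upper[OF cpt int h v cen] by simp
qed

lemma uf_convex:
  assumes "x0 \<in> unfolded_region \<Omega>" "x1 \<in> unfolded_region \<Omega>" "0 \<le> t" "t \<le> 1"
  shows "x0 + t *\<^sub>R (x1 - x0) \<in> unfolded_region \<Omega>"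
  unfolding unfolded_region_def
proof (intro InterI, clarsimp)
  fix v :: "real^2" assume v: "norm v = 1"
  have a: "uf_lower \<Omega> v \<le> x0 \<bullet> v" "x0 \<bullet> v \<le> uf_upper \<Omega> v"
    "uf_lower \<Omega> v \<le> x1 \<bullet> v" "x1 \<bullet> v \<le> uf_upper \<Omega> v"
    using assms(1,2) v unfolding unfolded_region_def by auto
  have e: "(x0 + t *\<^sub>R (x1 - x0)) \<bullet> v = (1 - t) * (x0 \<bullet> v) + t * (x1 \<bullet> v)"
    by (simp add: inner_add_left inner_diff_left algebra_simps)
  have "(1 - t) * uf_lower \<Omega> v \<le> (1 - t) * (x0 \<bullet> v)" using a assms by (intro mult_left_mono) auto
  moreover have "t * uf_lower \<Omega> v \<le> t * (x1 \<bullet> v)" using a assms by (intro mult_left_mono) auto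
  moreover have "(1 - t) * (x0 \<bullet> v) \<le> (1 - t) * uf_upper \<Omega> v" using a assms by (intro mult_left_mono) auto
  moreover have "t * (x1 \<bullet> v) \<le> t * uf_upper \<Omega> v" using a assms by (intro mult_left_mono) auto
  ultimately show "uf_lower \<Omega> v \<le> (x0 + t *\<^sub>R (x1 - x0)) \<bullet> v \<and> (x0 + t *\<^sub>R (x1 - x0)) \<bullet> v \<le> uf_upper \<Omega> v"
    unfolding e by (simp add: algebra_simps)
qed



lemma A_cont:
  fixes \<Omega> :: "(real^2) set"
  assumes cpt: "compact \<Omega>" and h: "h > 0"
  shows "continuous_on S (solid_angle \<Omega> h)"
proof (rule continuous_on_sequentiallyI)
  fix u :: "nat \<Rightarrow> real^2" and a assume u: "u \<longlonglongrightarrow> a"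
  have ic: "isCont (Kf h) p" for p
    using cont_Kf[OF h, of UNIV] by (simp add: continuous_on_eq_continuous_at)
  have "(\<lambda>k. integral \<Omega> (\<lambda>y. Kf h (y - u k))) \<longlonglongrightarrow> integral \<Omega> (\<lambda>y. Kf h (y - a))"
  proof (rule dominated_convergence(2))
    show "(\<lambda>y. Kf h (y - u k)) integrable_on \<Omega>" for k
      using absint_Kf[OF cpt h] set_lebesgue_integral_eq_integral(1) by blast
    show "(\<lambda>_. 1 / h^2) integrable_on \<Omega>" by (rule integrable_on_const[OF lmeasurable_compact[OF cpt]])
    show "norm (Kf h (y - u k)) \<le> 1 / h^2" for k y
      using Kf_pos[OF h, of "y - u k"] Kf_le[OF h, of "y - u k"] by simp
    show "(\<lambda>k. Kf h (y - u k)) \<longlonglongrightarrow> Kf h (y - a)" for y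
      by (rule isCont_tendsto_compose[OF ic]) (intro tendsto_intros u)
  qed
  then show "(\<lambda>n. solid_angle \<Omega> h (u n)) \<longlonglongrightarrow> solid_angle \<Omega> h a"
    unfolding solid_angle_Kf .
qed

lemma A_pos:
  fixes \<Omega> :: "(real^2) set"
  assumes cpt: "compact \<Omega>" and int: "interior \<Omega> \<noteq> {}" and h: "h > 0"
  shows "solid_angle \<Omega> h x > 0"
  unfolding solid_angle_Kf
proof (rule integral_pos[of _ _ "interior \<Omega>" "\<lambda>y. Kf h (y - x)"])
  show "(\<lambda>y. Kf h (y - x)) integrable_on \<Omega>"
    using absint_Kf[OF cpt h] set_lebesgue_integral_eq_integral(1) by blast
  show "0 \<le> Kf h (y - x)" for y using Kf_pos[OF h] less_imp_le by blast
  show "continuous_on (interior \<Omega>) (\<lambda>y. Kf h (y - x))"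
    using h unfolding Kf_def by (intro continuous_intros) (auto simp: add_pos_nonneg)
  show "0 < Kf h (y - x)" for y by (rule Kf_pos[OF h])
qed (use int interior_subset in auto)

lemma exists_center:
  fixes \<Omega> :: "(real^2) set"
  assumes cpt: "compact \<Omega>" and int: "interior \<Omega> \<noteq> {}" and h: "h > 0"
  shows "\<exists>x. solid_angle_center \<Omega> h x"
proof -
  obtain x0 where x0: "x0 \<in> \<Omega>" using int interior_subset by blast
  define A0 where "A0 = solid_angle \<Omega> h x0"
  have A0: "A0 > 0" unfolding A0_def by (rule A_pos[OF cpt int h])
  define \<mu> where "\<mu> = measure lebesgue \<Omega>"
  have \<mu>: "\<mu> \<ge> 0" unfolding \<mu>_def by simp
  obtain B where B: "\<And>z. z \<in> \<Omega> \<Longrightarrow> norm z \<le> B" using compact_imp_bounded[OF cpt] bounded_iff by blast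
  define R where "R = max 1 (h * \<mu> / A0 + 1)"
  have R1: "R \<ge> 1" unfolding R_def by simp
  have R2: "R > h * \<mu> / A0" unfolding R_def by simp
  have small: "h / R^3 * \<mu> < A0"
  proof -
    have "1 \<le> R^2" using R1 by (rule one_le_power)
    then have "R * 1 \<le> R * R^2" using R1 by (intro mult_left_mono) auto
    then have "R \<le> R^3" by (simp add: power2_eq_square power3_eq_cube)
    then have "h / R^3 * \<mu> \<le> h / R * \<mu>"
      using R1 h \<mu> by (intro mult_right_mono divide_left_mono) auto
    also have "h / R * \<mu> < A0"
      using R2 R1 A0 by (simp add: field_simps)
    finally show ?thesis .
  qed
  have far: "solid_angle \<Omega> h z < A0" if z: "norm z > B + R" for z
  proof -
    have "solid_angle \<Omega> h z \<le> integral \<Omega> (\<lambda>_. h / R^3)"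
      unfolding solid_angle_Kf
    proof (rule integral_le)
      show "(\<lambda>y. Kf h (y - z)) integrable_on \<Omega>"
        using absint_Kf[OF cpt h] set_lebesgue_integral_eq_integral(1) by blast
      show "(\<lambda>_. h / R^3) integrable_on \<Omega>" by (rule integrable_on_const[OF lmeasurable_compact[OF cpt]])
      fix y assume y: "y \<in> \<Omega>"
      have "norm z \<le> norm y + norm (y - z)" by (metis norm_triangle_sub norm_minus_commute add.commute)
      then have "norm (y - z) \<ge> R" using B[OF y] z by linarith
      then show "Kf h (y - z) \<le> h / R^3" using Kf_decay[OF h] R1 by simp
    qed
    also have "integral \<Omega> (\<lambda>_. h / R^3) = h / R^3 * \<mu>"
    proof -
      have "integral \<Omega> (\<lambda>_. h / R^3) = integral \<Omega> (\<lambda>_. h / R^3 * 1)" by simp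
      also have "\<dots> = h / R^3 * integral \<Omega> (\<lambda>_. 1::real)" by (rule Henstock_Kurzweil_Integration.integral_mult_right)
      also have "\<dots> = h / R^3 * \<mu>" unfolding \<mu>_def lmeasure_integral[OF lmeasurable_compact[OF cpt]] ..
      finally show ?thesis .
    qed
    finally show ?thesis using small by linarith
  qed
  define K where "K = cball (0::real^2) (B + R)"
  have x0K: "x0 \<in> K" unfolding K_def using B[OF x0] R1 by simp
  obtain xm where xm: "xm \<in> K" "\<And>y. y \<in> K \<Longrightarrow> solid_angle \<Omega> h y \<le> solid_angle \<Omega> h xm"
  proof -
    have cK: "compact K" unfolding K_def by simp
    have ne: "K \<noteq> {}" using x0K by blast
    show ?thesis using continuous_attains_sup[OF cK ne A_cont[OF cpt h]] that by blast
  qed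
  have "solid_angle_center \<Omega> h xm"
    unfolding solid_angle_center_def
  proof
    fix z show "solid_angle \<Omega> h z \<le> solid_angle \<Omega> h xm"
    proof (cases "z \<in> K")
      case True then show ?thesis using xm by blast
    next
      case False
      then have "norm z > B + R" unfolding K_def by simp
      then have "solid_angle \<Omega> h z < A0" by (rule far)
      also have "A0 \<le> solid_angle \<Omega> h xm" unfolding A0_def by (rule xm(2)[OF x0K])
      finally show ?thesis by simp
    qed
  qed
  then show ?thesis by blast
qed



lemma uf_norm_bound:
  "\<exists>M. \<forall>z \<in> unfolded_region \<Omega>. norm z \<le> M"
proof -
  let ?e1 = "axis 1 (1::real) :: real^2" and ?e2 = "axis 2 (1::real) :: real^2"
  define M where "M = (\<bar>uf_lower \<Omega> ?e1\<bar> + \<bar>uf_upper \<Omega> ?e1\<bar>) + (\<bar>uf_lower \<Omega> ?e2\<bar> + \<bar>uf_upper \<Omega> ?e2\<bar>)"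
  have "norm z \<le> M" if z: "z \<in> unfolded_region \<Omega>" for z
  proof -
    have "?e1 \<in> sphere 0 1" "?e2 \<in> sphere 0 1" by simp_all
    then have "uf_lower \<Omega> ?e1 \<le> z \<bullet> ?e1 \<and> z \<bullet> ?e1 \<le> uf_upper \<Omega> ?e1"
      "uf_lower \<Omega> ?e2 \<le> z \<bullet> ?e2 \<and> z \<bullet> ?e2 \<le> uf_upper \<Omega> ?e2"
      using z unfolding unfolded_region_def by blast+
    then have b1: "uf_lower \<Omega> ?e1 \<le> z $ 1" "z $ 1 \<le> uf_upper \<Omega> ?e1"
      and b2: "uf_lower \<Omega> ?e2 \<le> z $ 2" "z $ 2 \<le> uf_upper \<Omega> ?e2"
      by (simp_all add: inner_axis)
    have "norm z \<le> \<bar>z $ 1\<bar> + \<bar>z $ 2\<bar>" using norm_le_l1_cart[of z] by (simp add: sum_2)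
    also have "\<dots> \<le> M" unfolding M_def using b1 b2 by linarith
    finally show ?thesis .
  qed
  then show ?thesis by blast
qed

lemma push_out:
  fixes \<Omega> :: "(real^2) set"
  assumes y: "y \<in> interior \<Omega>"
  shows "\<exists>y1\<in>\<Omega>. dist x y < dist x y1"
proof -
  obtain e where e: "e > 0" "ball y e \<subseteq> \<Omega>" using y mem_interior by blast
  show ?thesis
  proof (cases "y = x")
    case True
    define y1 where "y1 = y + (e/2) *\<^sub>R axis 1 (1::real)"
    have "dist y y1 < e" unfolding y1_def dist_norm using e by simp
    then have "y1 \<in> \<Omega>" using e by auto
    moreover have "dist x y1 > dist x y" using True e unfolding y1_def dist_norm by simp
    ultimately show ?thesis by blast
  next
    case False
    define n where "n = norm (y - x)"
    have n: "n > 0" using False unfolding n_def by simp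
    define y1 where "y1 = y + (e / (2*n)) *\<^sub>R (y - x)"
    have "dist y y1 = e / (2 * n) * n" unfolding y1_def dist_norm n_def using n e by simp
    also have "\<dots> = e / 2" using n by simp
    finally have "dist y y1 < e" using e by simp
    then have "y1 \<in> \<Omega>" using e by auto
    moreover have "dist x y1 = (1 + e / (2*n)) * n"
    proof -
      have "y1 - x = (1 + e / (2*n)) *\<^sub>R (y - x)" unfolding y1_def by (simp add: algebra_simps)
      then have "norm (y1 - x) = (1 + e / (2*n)) * n" unfolding n_def using n e by simp
      then show ?thesis by (simp add: dist_norm norm_minus_commute)
    qed
    moreover have "(1 + e / (2*n)) * n > n" using n e by (simp add: field_simps)
    moreover have "dist x y = n" unfolding n_def by (simp add: dist_norm norm_minus_commute)
    ultimately have "y1 \<in> \<Omega> \<and> dist x y < dist x y1" by linarith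
    then show ?thesis by blast
  qed
qed

lemma far_bound:
  fixes \<Omega> :: "(real^2) set"
  assumes cpt: "compact \<Omega>" and int: "interior \<Omega> \<noteq> {}"
    and hyp: "h \<ge> 2 * Sup {dist z w | z w. z \<in> unfolded_region \<Omega> \<and> w \<in> frontier \<Omega>}"
    and x: "x \<in> unfolded_region \<Omega>"
  shows "\<And>y. y \<in> \<Omega> \<Longrightarrow> norm (y - x) \<le> h/2" and "\<And>y. y \<in> interior \<Omega> \<Longrightarrow> norm (y - x) < h/2"
proof -
  let ?SD = "{dist z w | z w. z \<in> unfolded_region \<Omega> \<and> w \<in> frontier \<Omega>}"
  have ne: "\<Omega> \<noteq> {}" using int interior_subset by blast
  obtain M where M: "\<And>z. z \<in> unfolded_region \<Omega> \<Longrightarrow> norm z \<le> M" using uf_norm_bound by blast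
  obtain B where B: "\<And>z. z \<in> \<Omega> \<Longrightarrow> norm z \<le> B" using compact_imp_bounded[OF cpt] bounded_iff by blast
  have fr: "frontier \<Omega> = \<Omega> - interior \<Omega>"
    using cpt compact_imp_closed frontier_def closure_closed by metis
  have bdd: "bdd_above ?SD"
  proof (rule bdd_aboveI)
    fix d assume "d \<in> ?SD"
    then obtain z w where zw: "d = dist z w" "z \<in> unfolded_region \<Omega>" "w \<in> frontier \<Omega>" by blast
    have "dist z w \<le> norm z + norm w" unfolding dist_norm by (rule norm_triangle_ineq4)
    then show "d \<le> M + B" using M[OF zw(2)] B[of w] zw fr by auto
  qed
  have dc: "continuous_on \<Omega> (\<lambda>y. dist x y)" by (intro continuous_intros)
  obtain y0 where y0: "y0 \<in> \<Omega>" "\<And>y. y \<in> \<Omega> \<Longrightarrow> dist x y \<le> dist x y0"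
    using continuous_attains_sup[OF cpt ne dc] by blast
  have "y0 \<notin> interior \<Omega>"
  proof
    assume "y0 \<in> interior \<Omega>"
    then obtain y1 where "y1 \<in> \<Omega>" "dist x y0 < dist x y1" using push_out by blast
    then show False using y0(2) by fastforce
  qed
  then have "y0 \<in> frontier \<Omega>" using fr y0(1) by blast
  then have "dist x y0 \<in> ?SD" using x by blast
  then have "dist x y0 \<le> Sup ?SD" by (rule cSup_upper[OF _ bdd])
  then have y0h: "dist x y0 \<le> h/2" using hyp by linarith
  show "norm (y - x) \<le> h/2" if "y \<in> \<Omega>" for y
    using y0(2)[OF that] y0h by (simp add: dist_norm norm_minus_commute)
  show "norm (y - x) < h/2" if yi: "y \<in> interior \<Omega>" for y
  proof -
    obtain y1 where "y1 \<in> \<Omega>" "dist x y < dist x y1" using push_out[OF yi] by blast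
    then have "dist x y < h/2" using y0(2) y0h by fastforce
    then show ?thesis by (simp add: dist_norm norm_minus_commute)
  qed
qed

theorem theorem4p5:
  fixes \<Omega> :: "(real^2) set" and h :: real
  assumes "compact \<Omega>" and "interior \<Omega> \<noteq> {}"
    and "h > 0"
    and "h \<ge> 2 * Sup {dist z w | z w. z \<in> unfolded_region \<Omega> \<and> w \<in> frontier \<Omega>}"
  shows "\<exists>!x. solid_angle_center \<Omega> h x"
proof -
  note cpt = assms(1) and int = assms(2) and h = assms(3) and hyp = assms(4)
  obtain x0 where x0: "solid_angle_center \<Omega> h x0" using exists_center[OF cpt int h] by blast
  have uniq: "x1 = x0" if x1: "solid_angle_center \<Omega> h x1" for x1
  proof (rule ccontr)
    assume ne: "x1 \<noteq> x0"
    have u0: "x0 \<in> unfolded_region \<Omega>" by (rule max_in_uf[OF cpt int h x0])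
    have u1: "x1 \<in> unfolded_region \<Omega>" by (rule max_in_uf[OF cpt int h x1])
    define D where "D = x1 - x0"
    have D: "D \<noteq> 0" using ne unfolding D_def by simp
    define m where "m = x0 + (1/2) *\<^sub>R D"
    have ut: "x0 + t *\<^sub>R D \<in> unfolded_region \<Omega>" if "0 \<le> t" "t \<le> 1" for t
      unfolding D_def by (rule uf_convex[OF u0 u1 that])
    have eqt: "y - x0 - t *\<^sub>R D = y - (x0 + t *\<^sub>R D)" for y t by (simp add: algebra_simps)
    define G where "G y = 2 * Kf h (y - m) - Kf h (y - x0) - Kf h (y - x1)" for y
    have Geq: "G y = 2 * Kf h ((y - x0) - (1/2) *\<^sub>R D) - (Kf h (y - x0) + Kf h ((y - x0) - D))" for y
      unfolding G_def m_def D_def by (simp add: algebra_simps)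
    have "integral \<Omega> G > 0"
    proof (rule integral_pos[of _ _ "interior \<Omega>" G])
      have i: "(\<lambda>y. Kf h (y - a)) integrable_on \<Omega>" for a
        using absint_Kf[OF cpt h] set_lebesgue_integral_eq_integral(1) by blast
      show "G integrable_on \<Omega>" unfolding G_def
        by (intro integrable_diff integrable_on_mult_right i)
      show "0 \<le> G y" if "y \<in> \<Omega>" for y
      proof -
        have "Kf h (y - x0) + Kf h ((y - x0) - D) \<le> 2 * Kf h ((y - x0) - (1/2) *\<^sub>R D)"
        proof (rule Kf_mid[OF h])
          fix t :: real assume "0 \<le> t" "t \<le> 1"
          then show "norm (y - x0 - t *\<^sub>R D) \<le> h / 2"
            unfolding eqt by (rule far_bound(1)[OF cpt int hyp ut that])
        qed
        then show ?thesis unfolding Geq by simp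
      qed
      show "0 < G y" if "y \<in> interior \<Omega>" for y
      proof -
        have "Kf h (y - x0) + Kf h ((y - x0) - D) < 2 * Kf h ((y - x0) - (1/2) *\<^sub>R D)"
        proof (rule Kf_mid_strict[OF h D])
          fix t :: real assume "0 \<le> t" "t \<le> 1"
          then show "norm (y - x0 - t *\<^sub>R D) < h / 2"
            unfolding eqt by (rule far_bound(2)[OF cpt int hyp ut that])
        qed
        then show ?thesis unfolding Geq by simp
      qed
      show "continuous_on (interior \<Omega>) G"
        using h unfolding G_def Kf_def by (intro continuous_intros) (auto simp: add_pos_nonneg)
    qed (use int interior_subset in auto)
    moreover have "integral \<Omega> G = 2 * solid_angle \<Omega> h m - solid_angle \<Omega> h x0 - solid_angle \<Omega> h x1"
    proof -
      have i: "(\<lambda>y. Kf h (y - a)) integrable_on \<Omega>" for a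
        using absint_Kf[OF cpt h] set_lebesgue_integral_eq_integral(1) by blast
      show ?thesis unfolding G_def solid_angle_Kf
        using i[of m] i[of x0] i[of x1]
        by (simp add: integral_diff integrable_diff integrable_on_mult_right)
    qed
    moreover have "solid_angle \<Omega> h m \<le> solid_angle \<Omega> h x0" "solid_angle \<Omega> h x1 \<le> solid_angle \<Omega> h x0"
      "solid_angle \<Omega> h x0 \<le> solid_angle \<Omega> h x1"
      using x0 x1 unfolding solid_angle_center_def by blast+
    ultimately show False by linarith
  qed
  show ?thesis using x0 uniq by blast
qed


end
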